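(* Let $\{\mathcal{L}_\gamma\}$ be a family of scale-invariant functions $\mathbb{R}^d\to\mathbb{R}$ ($\mathcal{L}_\gamma(cx)=\mathcal{L}_\gamma(x)$ for all $c>0$, $x\ne0$) indexed by a random data point $\gamma$, $\mathcal{L}=\mathbb{E}\mathcal{L}_\gamma$, and $\lambda>0$. For batch size $B$ and learning rate $\eta$, consider SGD with weight decay $x_{k+1}=x_k-\eta\nabla(\mathcal{L}_{\mathcal{B}_k}(x_k)+\frac\lambda2|x_k|^2)$, where $\mathcal{L}_{\mathcal{B}_k}$ is the average of $\mathcal{L}_\gamma$ over an independent mini-batch of $B$ samples, so that its gradient-noise covariance $\Sigma^B(x)$ satisfies $\Sigma^B(x)=\kappa\Sigma^{\kappa B}(x)$. Assume the limits $R^{B,\eta}_\infty=\lim_t\mathbb{E}|x_t|^2$, $G^{B,\eta}_\infty=\lim_t\mathbb{E}|\nabla\mathcal{L}(x_t)|^2$, $N^{B,\eta}_\infty=\lim_t\mathbb{E}\,\mathrm{Tr}[\Sigma^B(x_t)]$ exist for the relevant $(B,\eta)$. Then for any $B,\eta,C$ and $$\kappa>C^2\Big(1+\frac{N_\infty^{B,\eta}}{G_\infty^{B,\eta}}\Big),$$ SGD with batch size $B$ and learning rate $\eta$ does not exhibit $(C,\kappa)$-Linear Scaling Invariance.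
   Context: SGD with batch size $B$ and LR $\eta$ exhibits $(C,\kappa)$-Linear Scaling Invariance if, for a constant $C$ with $0<C<\sqrt\kappa$, $\frac1C\le\frac{R_\infty^{B,\eta}}{R_\infty^{\kappa B,\kappa\eta}},\ \frac{N_\infty^{B,\eta}}{\kappa N_\infty^{\kappa B,\kappa\eta}},\ \frac{G_\infty^{B,\eta}}{G_\infty^{\kappa B,\kappa\eta}}\le C.$ *)

theory Defs
  imports "HOL-Probability.Probability"
begin

text \<open>L :: 'g => 'a => real is the family of per-sample losses, gL its gradient
(in the parameter), L = E L_gamma is the full loss.\<close>

definition batch_space :: "'g measure \<Rightarrow> nat \<Rightarrow> (nat \<Rightarrow> 'g) measure" where
  "batch_space D B = PiM {..<B} (\<lambda>_. D)"

definition sgd_space :: "'g measure \<Rightarrow> nat \<Rightarrow> (nat \<Rightarrow> nat \<Rightarrow> 'g) measure" where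
  "sgd_space D B = PiM UNIV (\<lambda>_::nat. batch_space D B)"

definition batch_grad :: "('g \<Rightarrow> 'a \<Rightarrow> 'a::euclidean_space) \<Rightarrow> nat \<Rightarrow> (nat \<Rightarrow> 'g) \<Rightarrow> 'a \<Rightarrow> 'a" where
  "batch_grad gL B b x = (1 / real B) *\<^sub>R (\<Sum>i<B. gL (b i) x)"

definition full_grad :: "'g measure \<Rightarrow> ('g \<Rightarrow> 'a \<Rightarrow> 'a::euclidean_space) \<Rightarrow> 'a \<Rightarrow> 'a" where
  "full_grad D gL x = (\<integral>\<gamma>. gL \<gamma> x \<partial>D)"

definition trSigma :: "'g measure \<Rightarrow> ('g \<Rightarrow> 'a \<Rightarrow> 'a::euclidean_space) \<Rightarrow> nat \<Rightarrow> 'a \<Rightarrow> real" where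
  "trSigma D gL B x =
     (\<integral>b. (norm (batch_grad gL B b x - (\<integral>b'. batch_grad gL B b' x \<partial>batch_space D B)))\<^sup>2
        \<partial>batch_space D B)"

primrec sgd :: "('g \<Rightarrow> 'a \<Rightarrow> 'a::euclidean_space) \<Rightarrow> real \<Rightarrow> 'a \<Rightarrow> nat \<Rightarrow> real
                \<Rightarrow> (nat \<Rightarrow> nat \<Rightarrow> 'g) \<Rightarrow> nat \<Rightarrow> 'a" where
  "sgd gL lam x0 B eta \<omega> 0 = x0"
| "sgd gL lam x0 B eta \<omega> (Suc k) =
     sgd gL lam x0 B eta \<omega> k
       - eta *\<^sub>R (batch_grad gL B (\<omega> k) (sgd gL lam x0 B eta \<omega> k)
                   + lam *\<^sub>R sgd gL lam x0 B eta \<omega> k)"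

definition R_seq where
  "R_seq D gL lam x0 B eta t = (\<integral>\<omega>. (norm (sgd gL lam x0 B eta \<omega> t))\<^sup>2 \<partial>sgd_space D B)"
definition G_seq where
  "G_seq D gL lam x0 B eta t =
     (\<integral>\<omega>. (norm (full_grad D gL (sgd gL lam x0 B eta \<omega> t)))\<^sup>2 \<partial>sgd_space D B)"
definition N_seq where
  "N_seq D gL lam x0 B eta t =
     (\<integral>\<omega>. trSigma D gL B (sgd gL lam x0 B eta \<omega> t) \<partial>sgd_space D B)"

definition R_inf where "R_inf D gL lam x0 B eta = lim (R_seq D gL lam x0 B eta)"
definition G_inf where "G_inf D gL lam x0 B eta = lim (G_seq D gL lam x0 B eta)"
definition N_inf where "N_inf D gL lam x0 B eta = lim (N_seq D gL lam x0 B eta)"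

definition limits_exist where
  "limits_exist D gL lam x0 B eta \<longleftrightarrow>
     (\<forall>t. integrable (sgd_space D B) (\<lambda>\<omega>. (norm (sgd gL lam x0 B eta \<omega> t))\<^sup>2)
        \<and> integrable (sgd_space D B) (\<lambda>\<omega>. (norm (full_grad D gL (sgd gL lam x0 B eta \<omega> t)))\<^sup>2)
        \<and> integrable (sgd_space D B) (\<lambda>\<omega>. trSigma D gL B (sgd gL lam x0 B eta \<omega> t)))
   \<and> convergent (R_seq D gL lam x0 B eta)
   \<and> convergent (G_seq D gL lam x0 B eta)
   \<and> convergent (N_seq D gL lam x0 B eta)"

definition LSI where
  "LSI D gL lam x0 C \<kappa> B eta \<longleftrightarrow>
     0 < C \<and> C < sqrt \<kappa> \<and>
     (\<exists>Bk::nat. real Bk = \<kappa> * real B \<and>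
        (let R1 = R_inf D gL lam x0 B eta; R2 = R_inf D gL lam x0 Bk (\<kappa> * eta);
             N1 = N_inf D gL lam x0 B eta; N2 = N_inf D gL lam x0 Bk (\<kappa> * eta);
             G1 = G_inf D gL lam x0 B eta; G2 = G_inf D gL lam x0 Bk (\<kappa> * eta)
         in 1 / C \<le> R1 / R2 \<and> R1 / R2 \<le> C
          \<and> 1 / C \<le> N1 / (\<kappa> * N2) \<and> N1 / (\<kappa> * N2) \<le> C
          \<and> 1 / C \<le> G1 / G2 \<and> G1 / G2 \<le> C))"

end

theory Submission
  imports Defs
begin


lemma orth_lemma:
  fixes L :: "'g \<Rightarrow> 'a::euclidean_space \<Rightarrow> real"
  assumes scale_inv: "\<And>\<gamma> x c. x \<noteq> 0 \<Longrightarrow> c > 0 \<Longrightarrow> L \<gamma> (c *\<^sub>R x) = L \<gamma> x"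
    and grad: "\<And>\<gamma> x. x \<noteq> 0 \<Longrightarrow> GDERIV (L \<gamma>) x :> gL \<gamma> x"
  shows "inner x (gL \<gamma> x) = 0"
proof (cases "x = 0")
  case True then show ?thesis by simp
next
  case False
  have d1: "(L \<gamma> has_derivative (\<lambda>h. inner h (gL \<gamma> x))) (at ((1::real) *\<^sub>R x))"
    using grad[OF False] unfolding gderiv_def by simp
  have d2: "((\<lambda>c::real. c *\<^sub>R x) has_derivative (\<lambda>c. c *\<^sub>R x)) (at 1)"
    by (intro derivative_eq_intros) auto
  have "((\<lambda>c. L \<gamma> (c *\<^sub>R x)) has_derivative (\<lambda>c. inner x (gL \<gamma> x) * c)) (at 1)"
    using has_derivative_compose[OF d2 d1] by (simp add: o_def mult.commute)
  then have "((\<lambda>c. L \<gamma> (c *\<^sub>R x)) has_field_derivative inner x (gL \<gamma> x)) (at 1)"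
    by (simp add: has_field_derivative_def)
  then have "((\<lambda>c. L \<gamma> x) has_field_derivative inner x (gL \<gamma> x)) (at 1)"
    by (rule has_field_derivative_transform_within_open[where S="{0<..}"])
       (auto simp: scale_inv[OF False])
  moreover have "((\<lambda>c::real. L \<gamma> x) has_field_derivative 0) (at 1)" by simp
  ultimately show ?thesis using DERIV_unique by blast
qed



lemma gL_comp:
  assumes meas: "(\<lambda>(\<gamma>, x). gL \<gamma> x) \<in> borel_measurable (D \<Otimes>\<^sub>M borel)"
    and f: "f \<in> measurable N D" and h: "h \<in> borel_measurable N"
  shows "(\<lambda>\<omega>. gL (f \<omega>) (h \<omega>)) \<in> borel_measurable N"
proof -
  have "(\<lambda>\<omega>. (f \<omega>, h \<omega>)) \<in> measurable N (D \<Otimes>\<^sub>M borel)"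
    using f h by (rule measurable_Pair)
  from measurable_compose[OF this meas] show ?thesis by simp
qed

lemma gL_int:
  fixes gL :: "'g \<Rightarrow> 'a::euclidean_space \<Rightarrow> 'a"
  assumes D: "prob_space D"
    and meas: "(\<lambda>(\<gamma>, x). gL \<gamma> x) \<in> borel_measurable (D \<Otimes>\<^sub>M borel)"
    and sq_int: "\<And>x. integrable D (\<lambda>\<gamma>. (norm (gL \<gamma> x))\<^sup>2)"
  shows "integrable D (\<lambda>\<gamma>. gL \<gamma> y)"
proof -
  interpret prob_space D by fact
  have m: "(\<lambda>\<gamma>. gL \<gamma> y) \<in> borel_measurable D"
    using gL_comp[OF meas measurable_ident_sets[OF refl] measurable_const] by simp
  have i1: "integrable D (\<lambda>\<gamma>. 1 + (norm (gL \<gamma> y))\<^sup>2)"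
    using sq_int by simp
  have ae: "AE x in D. norm (gL x y) \<le> norm (1 + (norm (gL x y))\<^sup>2)"
  proof (intro AE_I2)
    fix x
    have "norm (gL x y) \<le> 1 + (norm (gL x y))\<^sup>2"
    proof -
      have "0 \<le> (norm (gL x y) - 1)\<^sup>2" by simp
      then have "2 * norm (gL x y) \<le> norm (gL x y) * norm (gL x y) + 1"
        unfolding power2_diff by (simp add: power2_eq_square)
      moreover have "0 \<le> norm (gL x y)" by simp
      ultimately show ?thesis unfolding power2_eq_square by linarith
    qed
    then show "norm (gL x y) \<le> norm (1 + (norm (gL x y))\<^sup>2)" by simp
  qed
  show ?thesis by (rule Bochner_Integration.integrable_bound[OF i1 m ae])
qed

lemma batch_prob:
  assumes D: "prob_space D" shows "prob_space (batch_space D B)"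
  unfolding batch_space_def using D by (intro prob_space_PiM) auto

lemma batch_comp_meas:
  assumes "i < B" shows "(\<lambda>b. b i) \<in> measurable (batch_space D B) D"
  unfolding batch_space_def using assms by (intro measurable_component_singleton) auto

lemma batch_distr:
  assumes D: "prob_space D" and "i < B"
  shows "distr (batch_space D B) D (\<lambda>b. b i) = D"
  unfolding batch_space_def using assms
  by (intro distr_PiM_component) auto

lemma batch_comp_int:
  fixes f :: "'g \<Rightarrow> 'b::{banach, second_countable_topology}"
  assumes D: "prob_space D" and i: "i < B" and f: "f \<in> borel_measurable D" and int: "integrable D f"
  shows "integrable (batch_space D B) (\<lambda>b. f (b i))"
    and "(\<integral>b. f (b i) \<partial>batch_space D B) = (\<integral>\<gamma>. f \<gamma> \<partial>D)"
proof -
  have e: "distr (batch_space D B) D (\<lambda>b. b i) = D" by (rule batch_distr[OF D i])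
  show "integrable (batch_space D B) (\<lambda>b. f (b i))"
    using int integrable_distr_eq[OF batch_comp_meas[OF i] f] e by simp
  show "(\<integral>b. f (b i) \<partial>batch_space D B) = (\<integral>\<gamma>. f \<gamma> \<partial>D)"
    using integral_distr[OF batch_comp_meas[OF i] f] e by simp
qed



lemma batch_var:
  fixes gL :: "'g \<Rightarrow> 'a::euclidean_space \<Rightarrow> 'a"
  assumes D: "prob_space D"
    and meas: "(\<lambda>(\<gamma>, x). gL \<gamma> x) \<in> borel_measurable (D \<Otimes>\<^sub>M borel)"
    and sq_int: "\<And>x. integrable D (\<lambda>\<gamma>. (norm (gL \<gamma> x))\<^sup>2)"
    and B: "B > 0"
  shows "integrable (batch_space D B) (\<lambda>b. (norm (batch_grad gL B b y))\<^sup>2)"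
    and "(\<integral>b. (norm (batch_grad gL B b y))\<^sup>2 \<partial>batch_space D B)
          = (norm (full_grad D gL y))\<^sup>2 + trSigma D gL B y"
proof -
  define M where "M = batch_space D B"
  interpret M: prob_space M unfolding M_def by (rule batch_prob[OF D])
  have gLm: "(\<lambda>\<gamma>. gL \<gamma> y) \<in> borel_measurable D"
    using gL_comp[OF meas measurable_ident_sets[OF refl] measurable_const] by simp
  have gLm2: "(\<lambda>\<gamma>. (norm (gL \<gamma> y))\<^sup>2) \<in> borel_measurable D"
    using gLm by measurable
  have gi_int: "integrable M (\<lambda>b. gL (b i) y)" if "i < B" for i
    unfolding M_def by (rule batch_comp_int(1)[OF D that gLm gL_int[OF D meas sq_int]])
  have gi_int': "(\<integral>b. gL (b i) y \<partial>M) = full_grad D gL y" if "i < B" for i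
    unfolding M_def full_grad_def by (rule batch_comp_int(2)[OF D that gLm gL_int[OF D meas sq_int]])
  have gi_sq_int: "integrable M (\<lambda>b. (norm (gL (b i) y))\<^sup>2)" if "i < B" for i
    unfolding M_def by (rule batch_comp_int(1)[OF D that gLm2 sq_int])
  define v where "v b = batch_grad gL B b y" for b
  define m where "m = full_grad D gL y"
  have "integrable M (\<lambda>x. \<Sum>i<B. gL (x i) y)"
    using gi_int by auto
  then have v_int: "integrable M v"
    unfolding v_def batch_grad_def by simp
  have m_eq: "(\<integral>b. v b \<partial>M) = m"
  proof -
    have "(\<integral>b. v b \<partial>M) = (1 / real B) *\<^sub>R (\<Sum>i<B. (\<integral>b. gL (b i) y \<partial>M))"
      unfolding v_def batch_grad_def
      by (simp add: integral_sum gi_int)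
    also have "\<dots> = (1 / real B) *\<^sub>R (\<Sum>i<B. m)"
      using gi_int' m_def by simp
    also have "\<dots> = m" using B by (simp add: sum_constant_scaleR)
    finally show ?thesis .
  qed
  have vm: "v \<in> borel_measurable M" using v_int by (rule borel_measurable_integrable)
  have v2m: "(\<lambda>b. (norm (v b))\<^sup>2) \<in> borel_measurable M" using vm by measurable
  have v_sq_int: "integrable M (\<lambda>b. (norm (v b))\<^sup>2)"
  proof -
    have "integrable M (\<lambda>b. (\<Sum>i<B. (norm (gL (b i) y))\<^sup>2))"
      using gi_sq_int by auto
    then have h: "integrable M (\<lambda>b. (\<Sum>i<B. (norm (gL (b i) y))\<^sup>2) * real B)"
      by simp
    have "norm ((norm (v b))\<^sup>2) \<le> norm ((\<Sum>i<B. (norm (gL (b i) y))\<^sup>2) * real B)" for b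
    proof -
      have "1 \<le> real B" using B by simp
      from mult_right_mono[OF this norm_ge_zero[of "\<Sum>i<B. gL (b i) y"]]
      have "norm (v b) \<le> norm (\<Sum>i<B. gL (b i) y)"
        unfolding v_def batch_grad_def using B by (simp add: field_simps)
      also have "\<dots> \<le> (\<Sum>i<B. norm (gL (b i) y))" by (rule norm_sum)
      finally have "(norm (v b))\<^sup>2 \<le> (\<Sum>i<B. norm (gL (b i) y))\<^sup>2"
        by (intro power_mono) auto
      also have "\<dots> \<le> (\<Sum>i<B. (norm (gL (b i) y))\<^sup>2) * card {..<B}"
        by (rule sum_squared_le_sum_of_squares)
      finally show ?thesis by (simp add: sum_nonneg)
    qed
    then show ?thesis
      by (intro Bochner_Integration.integrable_bound[OF h v2m] AE_I2)
  qed
  have vmm: "(\<lambda>b. (norm (v b - m))\<^sup>2) \<in> borel_measurable M" using vm by measurable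
  have vm_sq_int: "integrable M (\<lambda>b. (norm (v b - m))\<^sup>2)"
  proof -
    have h: "integrable M (\<lambda>b. 2 * (norm (v b))\<^sup>2 + 2 * (norm m)\<^sup>2)"
      using v_sq_int by simp
    have "norm ((norm (v b - m))\<^sup>2) \<le> norm (2 * (norm (v b))\<^sup>2 + 2 * (norm m)\<^sup>2)" for b
    proof -
      have "norm (v b - m) \<le> norm (v b) + norm m" by (rule norm_triangle_ineq4)
      then have "(norm (v b - m))\<^sup>2 \<le> (norm (v b) + norm m)\<^sup>2"
        by (intro power_mono) auto
      also have "\<dots> \<le> 2 * (norm (v b))\<^sup>2 + 2 * (norm m)\<^sup>2"
        using zero_le_power2[of "norm (v b) - norm m"]
        unfolding power2_sum power2_diff by linarith
      finally show ?thesis by simp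
    qed
    then show ?thesis
      by (intro Bochner_Integration.integrable_bound[OF h vmm] AE_I2)
  qed
  have pw: "(norm (v b))\<^sup>2 = (norm (v b - m))\<^sup>2 + 2 * inner (v b) m - (norm m)\<^sup>2" for b
    by (simp add: power2_norm_eq_inner inner_diff_left inner_diff_right inner_commute)
  have "(\<integral>b. (norm (v b))\<^sup>2 \<partial>M) = (\<integral>b. (norm (v b - m))\<^sup>2 + 2 * inner (v b) m - (norm m)\<^sup>2 \<partial>M)"
    by (simp add: pw)
  also have "\<dots> = (\<integral>b. (norm (v b - m))\<^sup>2 \<partial>M) + 2 * inner (\<integral>b. v b \<partial>M) m - (norm m)\<^sup>2"
    using vm_sq_int v_int by (simp add: M.prob_space)
  also have "\<dots> = (\<integral>b. (norm (v b - m))\<^sup>2 \<partial>M) + (norm m)\<^sup>2"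
    by (simp add: m_eq power2_norm_eq_inner)
  finally have "(\<integral>b. (norm (v b))\<^sup>2 \<partial>M) = (\<integral>b. (norm (v b - m))\<^sup>2 \<partial>M) + (norm m)\<^sup>2" .
  moreover have "trSigma D gL B y = (\<integral>b. (norm (v b - m))\<^sup>2 \<partial>M)"
    unfolding trSigma_def M_def[symmetric] v_def[symmetric] m_eq ..
  ultimately show "(\<integral>b. (norm (batch_grad gL B b y))\<^sup>2 \<partial>batch_space D B)
          = (norm (full_grad D gL y))\<^sup>2 + trSigma D gL B y"
    unfolding M_def v_def m_def by simp
  show "integrable (batch_space D B) (\<lambda>b. (norm (batch_grad gL B b y))\<^sup>2)"
    using v_sq_int unfolding M_def v_def .
qed



lemma bg_meas:
  fixes gL :: "'g \<Rightarrow> 'a::euclidean_space \<Rightarrow> 'a"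
  assumes meas: "(\<lambda>(\<gamma>, x). gL \<gamma> x) \<in> borel_measurable (D \<Otimes>\<^sub>M borel)"
    and f: "f \<in> measurable N (batch_space D B)" and h: "h \<in> borel_measurable N"
  shows "(\<lambda>\<omega>. batch_grad gL B (f \<omega>) (h \<omega>)) \<in> borel_measurable N"
proof -
  have "(\<lambda>\<omega>. gL (f \<omega> i) (h \<omega>)) \<in> borel_measurable N" if "i \<in> {..<B}" for i
  proof (rule gL_comp[OF meas _ h])
    show "(\<lambda>\<omega>. f \<omega> i) \<in> measurable N D"
      using measurable_compose[OF f batch_comp_meas[of i B D]] that by simp
  qed
  then have "(\<lambda>\<omega>. \<Sum>i<B. gL (f \<omega> i) (h \<omega>)) \<in> borel_measurable N"
    by (rule borel_measurable_sum)
  then show ?thesis unfolding batch_grad_def by measurable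
qed

lemma sgd_local:
  "(\<And>k. k < t \<Longrightarrow> \<omega> k = \<omega>' k) \<Longrightarrow> sgd gL lam x0 B eta \<omega> t = sgd gL lam x0 B eta \<omega>' t"
  by (induction t) auto

lemma sgd_meas:
  fixes gL :: "'g \<Rightarrow> 'a::euclidean_space \<Rightarrow> 'a"
  assumes meas: "(\<lambda>(\<gamma>, x). gL \<gamma> x) \<in> borel_measurable (D \<Otimes>\<^sub>M borel)"
  shows "{..<t} \<subseteq> I \<Longrightarrow> (\<lambda>\<omega>. sgd gL lam x0 B eta \<omega> t) \<in> borel_measurable (PiM I (\<lambda>_. batch_space D B))"
proof (induction t)
  case 0 then show ?case by simp
next
  case (Suc t)
  have "{..<t} \<subseteq> I" using Suc.prems by auto
  note IH = Suc.IH[OF this]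
  have tI: "t \<in> I" using Suc.prems by auto
  have c: "(\<lambda>\<omega>. \<omega> t) \<in> measurable (PiM I (\<lambda>_. batch_space D B)) (batch_space D B)"
    using tI by (rule measurable_component_singleton)
  have bg: "(\<lambda>\<omega>. batch_grad gL B (\<omega> t) (sgd gL lam x0 B eta \<omega> t)) \<in> borel_measurable (PiM I (\<lambda>_. batch_space D B))"
    by (rule bg_meas[OF meas c IH])
  show ?case using IH bg by simp
qed



lemma split_nn:
  assumes Mb: "prob_space Mb"
    and F: "F \<in> borel_measurable (PiM UNIV (\<lambda>_::nat. Mb))"
  shows "(\<integral>\<^sup>+\<omega>. F \<omega> \<partial>PiM UNIV (\<lambda>_::nat. Mb)) =
     (\<integral>\<^sup>+X. (\<integral>\<^sup>+x. F (X(t := x)) \<partial>Mb) \<partial>PiM (UNIV - {t}) (\<lambda>_. Mb))"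
proof -
  let ?P = "PiM (UNIV - {t}) (\<lambda>_::nat. Mb)"
  let ?S = "PiM UNIV (\<lambda>_::nat. Mb)"
  interpret Mb: prob_space Mb by fact
  interpret P: prob_space ?P using Mb by (intro prob_space_PiM) auto
  interpret pair_sigma_finite Mb ?P by unfold_locales
  have ins: "insert t (UNIV - {t}) = (UNIV :: nat set)" by auto
  have eqS: "distr (Mb \<Otimes>\<^sub>M ?P) ?S (\<lambda>(x, X). X(t := x)) = ?S"
    using distr_pair_PiM_eq_PiM[of "UNIV - {t}" "\<lambda>_. Mb" t] Mb unfolding ins by simp
  have um: "(\<lambda>p. (snd p)(t := fst p)) \<in> measurable (Mb \<Otimes>\<^sub>M ?P) ?S"
    by (rule measurable_fun_upd[where J="UNIV - {t}"]) auto
  have um': "(\<lambda>(x, X). X(t := x)) \<in> measurable (Mb \<Otimes>\<^sub>M ?P) ?S"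
    using um by (simp add: case_prod_beta)
  have "(\<integral>\<^sup>+\<omega>. F \<omega> \<partial>?S) = (\<integral>\<^sup>+\<omega>. F \<omega> \<partial>distr (Mb \<Otimes>\<^sub>M ?P) ?S (\<lambda>(x, X). X(t := x)))"
    using eqS by simp
  also have "\<dots> = (\<integral>\<^sup>+p. F ((snd p)(t := fst p)) \<partial>(Mb \<Otimes>\<^sub>M ?P))"
  proof -
    have F': "F \<in> borel_measurable (distr (Mb \<Otimes>\<^sub>M ?P) ?S (\<lambda>(x, X). X(t := x)))"
      using F by (subst measurable_cong_sets[OF sets_distr refl])
    show ?thesis by (subst nn_integral_distr[OF um' F']) (simp add: case_prod_beta)
  qed
  also have "\<dots> = (\<integral>\<^sup>+X. (\<integral>\<^sup>+x. F (X(t := x)) \<partial>Mb) \<partial>?P)"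
    using nn_integral_snd[of "\<lambda>p. F ((snd p)(t := fst p))"] measurable_compose[OF um F] by simp
  finally show ?thesis .
qed



lemma step_integral:
  fixes gL :: "'g \<Rightarrow> 'a::euclidean_space \<Rightarrow> 'a"
  assumes D: "prob_space D"
    and meas: "(\<lambda>(\<gamma>, x). gL \<gamma> x) \<in> borel_measurable (D \<Otimes>\<^sub>M borel)"
    and sq_int: "\<And>x. integrable D (\<lambda>\<gamma>. (norm (gL \<gamma> x))\<^sup>2)"
    and B: "B > 0"
    and intG: "integrable (sgd_space D B) (\<lambda>\<omega>. (norm (full_grad D gL (sgd gL lam x0 B eta \<omega> t)))\<^sup>2)"
    and intN: "integrable (sgd_space D B) (\<lambda>\<omega>. trSigma D gL B (sgd gL lam x0 B eta \<omega> t))"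
  shows "integrable (sgd_space D B) (\<lambda>\<omega>. (norm (batch_grad gL B (\<omega> t) (sgd gL lam x0 B eta \<omega> t)))\<^sup>2)"
    and "(\<integral>\<omega>. (norm (batch_grad gL B (\<omega> t) (sgd gL lam x0 B eta \<omega> t)))\<^sup>2 \<partial>sgd_space D B)
          = G_seq D gL lam x0 B eta t + N_seq D gL lam x0 B eta t"
proof -
  define Mb where "Mb = batch_space D B"
  define P where "P = PiM (UNIV - {t}) (\<lambda>_::nat. Mb)"
  define xt where "xt \<omega> = sgd gL lam x0 B eta \<omega> t" for \<omega>
  have S: "sgd_space D B = PiM UNIV (\<lambda>_::nat. Mb)" unfolding sgd_space_def Mb_def ..
  interpret Mb: prob_space Mb unfolding Mb_def by (rule batch_prob[OF D])
  have Mbp: "prob_space Mb" by (rule Mb.prob_space_axioms)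
  define psi' where "psi' y = (\<integral>\<^sup>+b. ennreal ((norm (batch_grad gL B b y))\<^sup>2) \<partial>Mb)" for y
  define psi where "psi y = (norm (full_grad D gL y))\<^sup>2 + trSigma D gL B y" for y
  have "(\<lambda>p. batch_grad gL B (snd p) (fst p)) \<in> borel_measurable (borel \<Otimes>\<^sub>M Mb)"
    unfolding Mb_def by (rule bg_meas[OF meas measurable_snd measurable_fst])
  then have "(\<lambda>p. ennreal ((norm (batch_grad gL B (snd p) (fst p)))\<^sup>2)) \<in> borel_measurable (borel \<Otimes>\<^sub>M Mb)"
    by measurable
  from Mb.borel_measurable_nn_integral_fst[OF this]
  have psi'_meas: "psi' \<in> borel_measurable borel" unfolding psi'_def by simp
  have psi'_eq: "psi' y = ennreal (psi y)" for y
  proof -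
    have "psi' y = ennreal (\<integral>b. (norm (batch_grad gL B b y))\<^sup>2 \<partial>Mb)"
      unfolding psi'_def Mb_def
      by (rule nn_integral_eq_integral[OF batch_var(1)[OF D meas sq_int B]]) simp
    then show ?thesis unfolding psi_def Mb_def using batch_var(2)[OF D meas sq_int B] by simp
  qed
  have xtS: "xt \<in> borel_measurable (PiM UNIV (\<lambda>_::nat. Mb))"
    unfolding xt_def Mb_def by (rule sgd_meas[OF meas]) simp
  have xtP: "xt \<in> borel_measurable P"
    unfolding xt_def Mb_def P_def by (rule sgd_meas[OF meas]) auto
  have comp: "(\<lambda>\<omega>. \<omega> t) \<in> measurable (PiM UNIV (\<lambda>_::nat. Mb)) (batch_space D B)"
    unfolding Mb_def by (rule measurable_component_singleton) simp
  have phim: "(\<lambda>\<omega>. batch_grad gL B (\<omega> t) (xt \<omega>)) \<in> borel_measurable (PiM UNIV (\<lambda>_::nat. Mb))"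
    by (rule bg_meas[OF meas comp xtS])
  then have phim2: "(\<lambda>\<omega>. (norm (batch_grad gL B (\<omega> t) (xt \<omega>)))\<^sup>2) \<in> borel_measurable (PiM UNIV (\<lambda>_::nat. Mb))"
    by measurable
  have xt_upd: "xt (X(t := x)) = xt X" for X x
    unfolding xt_def by (rule sgd_local) simp
  have "(\<integral>\<^sup>+\<omega>. ennreal ((norm (batch_grad gL B (\<omega> t) (xt \<omega>)))\<^sup>2) \<partial>PiM UNIV (\<lambda>_::nat. Mb))
      = (\<integral>\<^sup>+X. (\<integral>\<^sup>+x. ennreal ((norm (batch_grad gL B ((X(t := x)) t) (xt (X(t := x)))))\<^sup>2) \<partial>Mb) \<partial>P)"
    unfolding P_def by (rule split_nn[OF Mbp]) (use phim2 in measurable)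
  also have "\<dots> = (\<integral>\<^sup>+X. psi' (xt X) \<partial>P)"
    unfolding psi'_def xt_upd by simp
  also have "\<dots> = (\<integral>\<^sup>+X. (\<integral>\<^sup>+x. psi' (xt (X(t := x))) \<partial>Mb) \<partial>P)"
    unfolding xt_upd by (simp add: Mb.emeasure_space_1)
  also have "\<dots> = (\<integral>\<^sup>+\<omega>. psi' (xt \<omega>) \<partial>PiM UNIV (\<lambda>_::nat. Mb))"
    unfolding P_def by (rule split_nn[OF Mbp, symmetric]) (use psi'_meas xtS in measurable)
  also have "\<dots> = (\<integral>\<^sup>+\<omega>. ennreal (psi (xt \<omega>)) \<partial>PiM UNIV (\<lambda>_::nat. Mb))"
    unfolding psi'_eq ..
  also have "\<dots> = ennreal (\<integral>\<omega>. psi (xt \<omega>) \<partial>PiM UNIV (\<lambda>_::nat. Mb))"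
  proof (rule nn_integral_eq_integral)
    show "integrable (PiM UNIV (\<lambda>_::nat. Mb)) (\<lambda>\<omega>. psi (xt \<omega>))"
      using intG intN unfolding psi_def xt_def S by simp
    show "AE x in PiM UNIV (\<lambda>_::nat. Mb). 0 \<le> psi (xt x)"
      unfolding psi_def trSigma_def by (intro AE_I2 add_nonneg_nonneg) auto
  qed
  finally have nn: "(\<integral>\<^sup>+\<omega>. ennreal ((norm (batch_grad gL B (\<omega> t) (xt \<omega>)))\<^sup>2) \<partial>PiM UNIV (\<lambda>_::nat. Mb))
      = ennreal (\<integral>\<omega>. psi (xt \<omega>) \<partial>PiM UNIV (\<lambda>_::nat. Mb))" .
  have int: "integrable (PiM UNIV (\<lambda>_::nat. Mb)) (\<lambda>\<omega>. (norm (batch_grad gL B (\<omega> t) (xt \<omega>)))\<^sup>2)"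
    by (rule integrableI_nn_integral_finite[OF phim2 _ nn]) simp
  have "ennreal (\<integral>\<omega>. (norm (batch_grad gL B (\<omega> t) (xt \<omega>)))\<^sup>2 \<partial>PiM UNIV (\<lambda>_::nat. Mb))
       = ennreal (\<integral>\<omega>. psi (xt \<omega>) \<partial>PiM UNIV (\<lambda>_::nat. Mb))"
    using nn_integral_eq_integral[OF int] nn by simp
  then have "(\<integral>\<omega>. (norm (batch_grad gL B (\<omega> t) (xt \<omega>)))\<^sup>2 \<partial>PiM UNIV (\<lambda>_::nat. Mb))
       = (\<integral>\<omega>. psi (xt \<omega>) \<partial>PiM UNIV (\<lambda>_::nat. Mb))"
    by (subst (asm) ennreal_inj) (auto intro!: integral_nonneg_AE simp: psi_def trSigma_def)
  also have "\<dots> = G_seq D gL lam x0 B eta t + N_seq D gL lam x0 B eta t"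
    unfolding psi_def G_seq_def N_seq_def xt_def S[symmetric]
    using intG intN by simp
  finally show "(\<integral>\<omega>. (norm (batch_grad gL B (\<omega> t) (sgd gL lam x0 B eta \<omega> t)))\<^sup>2 \<partial>sgd_space D B)
          = G_seq D gL lam x0 B eta t + N_seq D gL lam x0 B eta t"
    unfolding S xt_def .
  show "integrable (sgd_space D B) (\<lambda>\<omega>. (norm (batch_grad gL B (\<omega> t) (sgd gL lam x0 B eta \<omega> t)))\<^sup>2)"
    using int unfolding S xt_def .
qed



lemma bg_orth:
  assumes orth: "\<And>\<gamma> x. inner x (gL \<gamma> x) = 0"
  shows "inner y (batch_grad gL B b y) = 0"
  unfolding batch_grad_def by (simp add: inner_sum_right orth)

lemma steady:
  fixes gL :: "'g \<Rightarrow> 'a::euclidean_space \<Rightarrow> 'a"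
  assumes D: "prob_space D"
    and meas: "(\<lambda>(\<gamma>, x). gL \<gamma> x) \<in> borel_measurable (D \<Otimes>\<^sub>M borel)"
    and sq_int: "\<And>x. integrable D (\<lambda>\<gamma>. (norm (gL \<gamma> x))\<^sup>2)"
    and B: "B > 0"
    and orth: "\<And>\<gamma> x. inner x (gL \<gamma> x) = 0"
    and lim: "limits_exist D gL lam x0 B eta"
  shows "(1 - (1 - eta * lam)\<^sup>2) * R_inf D gL lam x0 B eta
         = eta\<^sup>2 * (G_inf D gL lam x0 B eta + N_inf D gL lam x0 B eta)"
proof -
  let ?R = "R_seq D gL lam x0 B eta" and ?G = "G_seq D gL lam x0 B eta" and ?N = "N_seq D gL lam x0 B eta"
  have ints: "integrable (sgd_space D B) (\<lambda>\<omega>. (norm (sgd gL lam x0 B eta \<omega> t))\<^sup>2)"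
    "integrable (sgd_space D B) (\<lambda>\<omega>. (norm (full_grad D gL (sgd gL lam x0 B eta \<omega> t)))\<^sup>2)"
    "integrable (sgd_space D B) (\<lambda>\<omega>. trSigma D gL B (sgd gL lam x0 B eta \<omega> t))" for t
    using lim unfolding limits_exist_def by auto
  have pw: "(norm (sgd gL lam x0 B eta \<omega> (Suc t)))\<^sup>2
      = (1 - eta * lam)\<^sup>2 * (norm (sgd gL lam x0 B eta \<omega> t))\<^sup>2
        + eta\<^sup>2 * (norm (batch_grad gL B (\<omega> t) (sgd gL lam x0 B eta \<omega> t)))\<^sup>2" for \<omega> t
  proof -
    define x where "x = sgd gL lam x0 B eta \<omega> t"
    define g where "g = batch_grad gL B (\<omega> t) x"
    have o: "inner x g = 0" unfolding g_def by (rule bg_orth[OF orth])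
    have "sgd gL lam x0 B eta \<omega> (Suc t) = (1 - eta * lam) *\<^sub>R x - eta *\<^sub>R g"
      by (simp add: x_def g_def algebra_simps)
    moreover have "(norm ((1 - eta * lam) *\<^sub>R x - eta *\<^sub>R g))\<^sup>2
        = inner ((1 - eta * lam) *\<^sub>R x - eta *\<^sub>R g) ((1 - eta * lam) *\<^sub>R x - eta *\<^sub>R g)"
      by (rule power2_norm_eq_inner)
    moreover have "\<dots> = (1 - eta * lam)\<^sup>2 * inner x x - 2 * (1 - eta * lam) * eta * inner x g + eta\<^sup>2 * inner g g"
      by (simp add: inner_diff_left inner_diff_right inner_commute power2_eq_square algebra_simps)
    ultimately have "(norm (sgd gL lam x0 B eta \<omega> (Suc t)))\<^sup>2 = (1 - eta * lam)\<^sup>2 * (norm x)\<^sup>2 + eta\<^sup>2 * (norm g)\<^sup>2"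
      using o by (simp add: dot_square_norm)
    then show ?thesis unfolding x_def g_def .
  qed
  have rec: "?R (Suc t) = (1 - eta * lam)\<^sup>2 * ?R t + eta\<^sup>2 * (?G t + ?N t)" for t
  proof -
    note si = step_integral[OF D meas sq_int B ints(2) ints(3), of t]
    have "?R (Suc t) = (\<integral>\<omega>. (1 - eta * lam)\<^sup>2 * (norm (sgd gL lam x0 B eta \<omega> t))\<^sup>2
        + eta\<^sup>2 * (norm (batch_grad gL B (\<omega> t) (sgd gL lam x0 B eta \<omega> t)))\<^sup>2 \<partial>sgd_space D B)"
      unfolding R_seq_def pw ..
    also have "\<dots> = (1 - eta * lam)\<^sup>2 * ?R t + eta\<^sup>2 * (?G t + ?N t)"
      using ints(1)[of t] si by (simp add: R_seq_def)
    finally show ?thesis .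
  qed
  have cR: "?R \<longlonglongrightarrow> R_inf D gL lam x0 B eta" and cG: "?G \<longlonglongrightarrow> G_inf D gL lam x0 B eta"
    and cN: "?N \<longlonglongrightarrow> N_inf D gL lam x0 B eta"
    using lim unfolding limits_exist_def R_inf_def G_inf_def N_inf_def
    by (auto simp: convergent_LIMSEQ_iff)
  have "(\<lambda>t. ?R (Suc t)) \<longlonglongrightarrow> R_inf D gL lam x0 B eta"
    using cR by (rule LIMSEQ_Suc)
  moreover have "(\<lambda>t. ?R (Suc t)) \<longlonglongrightarrow> (1 - eta * lam)\<^sup>2 * R_inf D gL lam x0 B eta
      + eta\<^sup>2 * (G_inf D gL lam x0 B eta + N_inf D gL lam x0 B eta)"
    unfolding rec by (intro tendsto_intros cR cG cN)
  ultimately have "R_inf D gL lam x0 B eta = (1 - eta * lam)\<^sup>2 * R_inf D gL lam x0 B eta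
      + eta\<^sup>2 * (G_inf D gL lam x0 B eta + N_inf D gL lam x0 B eta)"
    by (rule LIMSEQ_unique)
  then show ?thesis by (simp add: algebra_simps)
qed

lemma lim_nonneg:
  assumes "convergent X" "\<And>t. 0 \<le> X t" shows "0 \<le> lim (X :: nat \<Rightarrow> real)"
  using assms by (intro LIMSEQ_le_const[OF convergent_LIMSEQ_iff[THEN iffD1]]) auto

lemma infs_nonneg:
  assumes lim: "limits_exist D gL lam x0 B eta"
  shows "0 \<le> R_inf D gL lam x0 B eta" "0 \<le> G_inf D gL lam x0 B eta" "0 \<le> N_inf D gL lam x0 B eta"
  using lim unfolding limits_exist_def R_inf_def G_inf_def N_inf_def
  by (auto intro!: lim_nonneg simp: R_seq_def G_seq_def N_seq_def trSigma_def)



lemma alg: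
  fixes C k eta lam R1 R2 G1 G2 N1 N2 :: real
  assumes C: "0 < C" "C < sqrt k" and eta: "eta > 0" and lam: "lam > 0"
    and nn: "0 \<le> R1" "0 \<le> R2" "0 \<le> G1" "0 \<le> G2" "0 \<le> N1" "0 \<le> N2"
    and e1: "(1 - (1 - eta * lam)\<^sup>2) * R1 = eta\<^sup>2 * (G1 + N1)"
    and e2: "(1 - (1 - k * eta * lam)\<^sup>2) * R2 = (k * eta)\<^sup>2 * (G2 + N2)"
    and b: "1 / C \<le> R1 / R2" "R1 / R2 \<le> C" "1 / C \<le> N1 / (k * N2)" "N1 / (k * N2) \<le> C"
       "1 / C \<le> G1 / G2" "G1 / G2 \<le> C"
    and kap: "k > C\<^sup>2 * (1 + N1 / G1)"
  shows False
proof -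
  have iC: "0 < 1 / C" using C by simp
  have "1 \<le> C * C" using order_trans[OF b(5) b(6)] C by (simp add: field_simps)
  have C1: "1 \<le> C"
  proof (rule ccontr)
    assume "\<not> 1 \<le> C"
    then have "C < 1" by simp
    then have "C * C < 1 * 1" using C by (intro mult_strict_mono) auto
    then show False using \<open>1 \<le> C * C\<close> by simp
  qed
  have kpos: "0 < k" using C by (metis less_trans real_sqrt_gt_0_iff)
  have "C\<^sup>2 < (sqrt k)\<^sup>2" using C by (intro power_strict_mono) auto
  then have "C\<^sup>2 < k" using kpos by simp
  moreover have "1 \<le> C\<^sup>2" using C1 by (simp add: one_le_power)
  ultimately have k1: "1 < k" by linarith
  have R2: "R2 > 0" using b(1) iC nn(2) by (cases "R2 = 0") auto
  have R1: "R1 > 0" using b(1) iC R2 nn(1) by (cases "R1 = 0") auto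
  have G2: "G2 > 0" using b(5) iC nn(4) by (cases "G2 = 0") auto
  have G1: "G1 > 0" using b(5) iC G2 nn(3) by (cases "G1 = 0") auto
  have N2: "N2 > 0" using b(3) iC nn(6) by (cases "N2 = 0") auto
  define a where "a = eta * lam"
  have a: "a > 0" unfolding a_def using eta lam by simp
  have e1': "lam * (2 - a) * R1 = eta * (G1 + N1)"
  proof -
    have "eta * (lam * (2 - a) * R1) = eta * (eta * (G1 + N1))"
      using e1 unfolding a_def by (simp add: power2_eq_square algebra_simps)
    then show ?thesis using eta by simp
  qed
  have e2': "lam * (2 - k * a) * R2 = k * eta * (G2 + N2)"
  proof -
    have "(k * eta) * (lam * (2 - k * a) * R2) = (k * eta) * (k * eta * (G2 + N2))"
      using e2 unfolding a_def by (simp add: power2_eq_square algebra_simps)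
    then show ?thesis using eta k1 by simp
  qed
  have pos2: "2 - k * a > 0"
  proof -
    have "k * eta * (G2 + N2) > 0" using k1 eta G2 N2 by simp
    then have "lam * ((2 - k * a) * R2) > 0" using e2' by (simp add: mult.assoc)
    then show ?thesis using lam R2 by (simp add: zero_less_mult_iff)
  qed
  have le2: "2 - k * a \<le> 2 - a" using k1 a by (simp add: mult_le_cancel_right1)
  have r: "R2 \<le> C * R1" using b(1) R2 C by (simp add: field_simps)
  have g: "G1 \<le> C * G2" using b(6) G2 by (simp add: field_simps)
  have n: "N1 \<le> C * (k * N2)" using b(4) N2 k1 by (simp add: field_simps)
  have "eta * (k * G1 + N1) \<le> eta * (C * (k * (G2 + N2)))"
  proof -
    have "k * G1 \<le> k * (C * G2)" using g k1 by simp
    moreover have "C * (k * (G2 + N2)) = k * (C * G2) + C * (k * N2)" by (simp add: algebra_simps)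
    ultimately have "k * G1 + N1 \<le> C * (k * (G2 + N2))" using n by linarith
    then show ?thesis using eta by (simp add: mult_left_mono)
  qed
  also have "\<dots> = C * (lam * (2 - k * a) * R2)" using e2' by (simp add: algebra_simps)
  also have "\<dots> \<le> C * (lam * (2 - k * a) * (C * R1))"
    using r C lam pos2 by (simp add: mult_left_mono)
  also have "\<dots> \<le> C * C * (lam * (2 - a) * R1)"
  proof -
    have "lam * (2 - k * a) * R1 \<le> lam * (2 - a) * R1"
      using le2 lam R1 by (simp add: mult_right_mono)
    then show ?thesis using C by (simp add: mult_left_mono algebra_simps)
  qed
  also have "\<dots> = eta * (C * C * (G1 + N1))" using e1' by (simp add: algebra_simps)
  finally have "k * G1 + N1 \<le> C * C * (G1 + N1)" using eta by simp
  moreover have "k * G1 > C * C * (G1 + N1)"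
  proof -
    have "k * G1 > C\<^sup>2 * (1 + N1 / G1) * G1" using kap G1 by simp
    moreover have "C\<^sup>2 * (1 + N1 / G1) * G1 = C * C * (G1 + N1)"
      using G1 by (simp add: field_simps power2_eq_square)
    ultimately show ?thesis by simp
  qed
  ultimately show False using nn(5) by linarith
qed


theorem theorem4:
  fixes D :: "'g measure"
    and L :: "'g \<Rightarrow> 'a::euclidean_space \<Rightarrow> real"
    and gL :: "'g \<Rightarrow> 'a \<Rightarrow> 'a"
    and lam eta C \<kappa> :: real
    and x0 :: 'a
    and B Bk :: nat
  assumes D: "prob_space D"
    and scale_inv: "\<And>\<gamma> x c. x \<noteq> 0 \<Longrightarrow> c > 0 \<Longrightarrow> L \<gamma> (c *\<^sub>R x) = L \<gamma> x"
    and grad: "\<And>\<gamma> x. x \<noteq> 0 \<Longrightarrow> GDERIV (L \<gamma>) x :> gL \<gamma> x"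
    and full_grad: "\<And>x. x \<noteq> 0 \<Longrightarrow>
          GDERIV (\<lambda>y. \<integral>\<gamma>. L \<gamma> y \<partial>D) x :> full_grad D gL x"
    and meas: "(\<lambda>(\<gamma>, x). gL \<gamma> x) \<in> borel_measurable (D \<Otimes>\<^sub>M borel)"
    and sq_int: "\<And>x. integrable D (\<lambda>\<gamma>. (norm (gL \<gamma> x))\<^sup>2)"
    and lam: "lam > 0"
    and eta: "eta > 0"
    and B: "B > 0"
    and Bk: "real Bk = \<kappa> * real B"
    and lim1: "limits_exist D gL lam x0 B eta"
    and lim2: "limits_exist D gL lam x0 Bk (\<kappa> * eta)"
    and kappa: "\<kappa> > C\<^sup>2 * (1 + N_inf D gL lam x0 B eta / G_inf D gL lam x0 B eta)"
  shows "\<not> LSI D gL lam x0 C \<kappa> B eta"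
proof
  assume lsi: "LSI D gL lam x0 C \<kappa> B eta"
  have orth: "\<And>\<gamma> x. inner x (gL \<gamma> x) = 0"
    by (rule orth_lemma[OF scale_inv grad])
  from lsi obtain Bk' where C: "0 < C" "C < sqrt \<kappa>" and Bk': "real Bk' = \<kappa> * real B"
    and lt: "let R1 = R_inf D gL lam x0 B eta; R2 = R_inf D gL lam x0 Bk' (\<kappa> * eta);
             N1 = N_inf D gL lam x0 B eta; N2 = N_inf D gL lam x0 Bk' (\<kappa> * eta);
             G1 = G_inf D gL lam x0 B eta; G2 = G_inf D gL lam x0 Bk' (\<kappa> * eta)
         in 1 / C \<le> R1 / R2 \<and> R1 / R2 \<le> C
          \<and> 1 / C \<le> N1 / (\<kappa> * N2) \<and> N1 / (\<kappa> * N2) \<le> C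
          \<and> 1 / C \<le> G1 / G2 \<and> G1 / G2 \<le> C"
    unfolding LSI_def by blast
  have "Bk' = Bk" using Bk Bk' by simp
  then have b: "1 / C \<le> R_inf D gL lam x0 B eta / R_inf D gL lam x0 Bk (\<kappa> * eta)"
    "R_inf D gL lam x0 B eta / R_inf D gL lam x0 Bk (\<kappa> * eta) \<le> C"
    "1 / C \<le> N_inf D gL lam x0 B eta / (\<kappa> * N_inf D gL lam x0 Bk (\<kappa> * eta))"
    "N_inf D gL lam x0 B eta / (\<kappa> * N_inf D gL lam x0 Bk (\<kappa> * eta)) \<le> C"
    "1 / C \<le> G_inf D gL lam x0 B eta / G_inf D gL lam x0 Bk (\<kappa> * eta)"
    "G_inf D gL lam x0 B eta / G_inf D gL lam x0 Bk (\<kappa> * eta) \<le> C"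
    using lt by (simp_all add: Let_def)
  have kpos: "0 < \<kappa>" using C by (metis less_trans real_sqrt_gt_0_iff)
  have Bkpos: "Bk > 0"
  proof -
    have "real Bk > 0" using Bk kpos B by simp
    then show ?thesis by simp
  qed
  note e1 = steady[OF D meas sq_int B orth lim1]
  note e2 = steady[OF D meas sq_int Bkpos orth lim2]
  have e2': "(1 - (1 - \<kappa> * eta * lam)\<^sup>2) * R_inf D gL lam x0 Bk (\<kappa> * eta)
     = (\<kappa> * eta)\<^sup>2 * (G_inf D gL lam x0 Bk (\<kappa> * eta) + N_inf D gL lam x0 Bk (\<kappa> * eta))"
    using e2 by (simp add: mult.assoc)
  note n1 = infs_nonneg[OF lim1] and n2 = infs_nonneg[OF lim2]
  show False
    by (rule alg[OF C eta lam n1(1) n2(1) n1(2) n2(2) n1(3) n2(3) e1 e2' b kappa])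
qed

end
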